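(* The discrete comparison principle holds on $G^h$ for the discrete obstacle problem $F^{W,h}$: for all $u,v\in C(G^h)$, if $F^{W,h}[u](x)\le F^{W,h}[v](x)$ for all $x\in G^h$, then $u\le v$ on $G^h$.
   Context: Let $\Omega\subset D=[-1,1]^n$, $h>0$, $g\in C(G^h)$. Grid: $G^h=\{x\in h\mathbb{Z}^n: x\in D\}$, $G^h_V=\Omega\cap G^h$, $\partial G^h=G^h\setminus G^h_V$; $C(G^h)$ is the set of functions $G^h\to\mathbb{R}$. A grid direction set $\mathcal{D}^W$ is a finite set of nonzero vectors of $\mathbb{Z}^n$ spanning $\mathbb{R}^n$ and closed under $v\mapsto-v$; $h$ is assumed small enough that $x\pm hv\in G^h$ for all $x\in G^h_V$, $v\in\mathcal{D}^W$. For $v\in\mathcal{D}^W$, $D^h_{vv}u(x)=\frac{u(x+hv)-2u(x)+u(x-hv)}{h^2\|v\|^2}$ ($x\in G^h_V$), $\lambda^h_{\mathcal{D}^W}[u](x)=\min_{v\in\mathcal{D}^W}D^h_{vv}u(x)$, and $F^{W,h}[u](x)=\max\{u(x)-g(x),-\lambda^h_{\mathcal{D}^W}[u](x)\}$ for $x\in G^h_V$, $F^{W,h}[u](x)=u(x)-g(x)$ for $x\in\partial G^h$. *)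

theory Defs
  imports "HOL-Analysis.Analysis"
begin

definition cube :: "(real^'n) set" where
  "cube = {x. \<forall>i. -1 \<le> x$i \<and> x$i \<le> 1}"

definition grid :: "real \<Rightarrow> (real^'n) set" where
  "grid h = {x. (\<forall>i. \<exists>k::int. x$i = h * of_int k) \<and> x \<in> cube}"

definition grid_int :: "(real^'n) set \<Rightarrow> real \<Rightarrow> (real^'n) set" where
  "grid_int \<Omega> h = \<Omega> \<inter> grid h"

definition grid_bdry :: "(real^'n) set \<Rightarrow> real \<Rightarrow> (real^'n) set" where
  "grid_bdry \<Omega> h = grid h - grid_int \<Omega> h"

definition grid_direction_set :: "(real^'n) set \<Rightarrow> bool" where
  "grid_direction_set W \<longleftrightarrow> finite W \<and> 0 \<notin> W \<and> (\<forall>v\<in>W. \<forall>i. v$i \<in> \<int>)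
     \<and> span W = UNIV \<and> (\<forall>v\<in>W. -v \<in> W)"

definition Dvv :: "real \<Rightarrow> (real^'n \<Rightarrow> real) \<Rightarrow> real^'n \<Rightarrow> real^'n \<Rightarrow> real" where
  "Dvv h u v x = (u (x + h *\<^sub>R v) - 2 * u x + u (x - h *\<^sub>R v)) / (h\<^sup>2 * (norm v)\<^sup>2)"

definition lambda_h :: "(real^'n) set \<Rightarrow> real \<Rightarrow> (real^'n \<Rightarrow> real) \<Rightarrow> real^'n \<Rightarrow> real" where
  "lambda_h W h u x = Min ((\<lambda>v. Dvv h u v x) ` W)"

definition F_obst :: "(real^'n) set \<Rightarrow> (real^'n) set \<Rightarrow> (real^'n \<Rightarrow> real) \<Rightarrow> real
    \<Rightarrow> (real^'n \<Rightarrow> real) \<Rightarrow> real^'n \<Rightarrow> real" where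
  "F_obst W \<Omega> g h u x =
     (if x \<in> grid_int \<Omega> h then max (u x - g x) (- lambda_h W h u x) else u x - g x)"

end

theory Submission
  imports Defs
begin

lemma grid_finite:
  assumes "h > 0"
  shows "finite (grid h :: (real^'n) set)"
proof -
  define N where "N = ceiling (1/h)"
  define S where "S = (\<lambda>k::int. h * of_int k) ` {-N..N}"
  have fS: "finite S" unfolding S_def by simp
  have sub: "grid h \<subseteq> (\<lambda>f. \<chi> i. f i) ` (PiE UNIV (\<lambda>_::'n. S))"
  proof
    fix x :: "real^'n" assume x: "x \<in> grid h"
    have "\<forall>i. x$i \<in> S"
    proof
      fix i
      from x obtain k :: int where k: "x$i = h * of_int k" and c: "-1 \<le> x$i" "x$i \<le> 1"
        unfolding grid_def cube_def by blast
      have "\<bar>h * of_int k\<bar> \<le> 1" using k c by auto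
      hence "h * \<bar>of_int k\<bar> \<le> 1" using assms by (simp add: abs_mult)
      hence "\<bar>of_int k\<bar> \<le> 1/h" using assms by (simp add: field_simps)
      hence "\<bar>of_int k\<bar> \<le> real_of_int N" unfolding N_def
        by (meson le_of_int_ceiling order_trans)
      hence "\<bar>k\<bar> \<le> N" by linarith
      hence "k \<in> {-N..N}" by auto
      thus "x$i \<in> S" unfolding S_def using k by blast
    qed
    hence "(\<lambda>i. x$i) \<in> PiE UNIV (\<lambda>_. S)" by auto
    moreover have "x = (\<chi> i. (\<lambda>i. x$i) i)" by simp
    ultimately show "x \<in> (\<lambda>f. \<chi> i. f i) ` (PiE UNIV (\<lambda>_::'n. S))" by blast
  qed
  show ?thesis
    by (rule finite_subset[OF sub]) (intro finite_imageI finite_PiE fS, simp_all)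
qed

theorem mainTheorem6:
  fixes \<Omega> W :: "(real^'n) set" and h :: real and g u v :: "real^'n \<Rightarrow> real"
  assumes "\<Omega> \<subseteq> cube"
    and "h > 0"
    and "grid_direction_set W"
    and "\<forall>x\<in>grid_int \<Omega> h. \<forall>d\<in>W. x + h *\<^sub>R d \<in> grid h \<and> x - h *\<^sub>R d \<in> grid h"
    and "\<forall>x\<in>grid h. F_obst W \<Omega> g h u x \<le> F_obst W \<Omega> g h v x"
  shows "\<forall>x\<in>grid h. u x \<le> v x"
proof (rule ccontr)
  assume "\<not> ?thesis"
  then obtain y where y: "y \<in> grid h" "u y > v y" by auto
  have fin: "finite (grid h :: (real^'n) set)" using grid_finite assms(2) .
  define M where "M = Max ((\<lambda>x. u x - v x) ` grid h)"
  have Mge: "\<And>x. x \<in> grid h \<Longrightarrow> u x - v x \<le> M" unfolding M_def using fin by auto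
  have "M \<in> (\<lambda>x. u x - v x) ` grid h" unfolding M_def using fin y(1) by (intro Max_in) auto
  define A where "A = {x \<in> grid h. u x - v x = M}"
  have Ane: "A \<noteq> {}" using \<open>M \<in> _\<close> unfolding A_def by auto
  have fA: "finite A" using fin unfolding A_def by auto
  define R where "R = Max (norm ` A)"
  have "R \<in> norm ` A" unfolding R_def using fA Ane by (intro Max_in) auto
  then obtain x where x: "x \<in> A" "norm x = R" by auto
  have Rge: "\<And>z. z \<in> A \<Longrightarrow> norm z \<le> R" unfolding R_def using fA by auto
  have xg: "x \<in> grid h" and xM: "u x - v x = M" using x(1) unfolding A_def by auto
  have Mpos: "M > 0" using Mge[OF y(1)] y(2) by linarith
  have Fx: "F_obst W \<Omega> g h u x \<le> F_obst W \<Omega> g h v x" using assms(5) xg by auto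
  show False
  proof (cases "x \<in> grid_int \<Omega> h")
    case False
    then show ?thesis using Fx xM Mpos unfolding F_obst_def by auto
  next
    case True
    have fW: "finite W" and W0: "0 \<notin> W" and spW: "span W = UNIV"
      using assms(3) unfolding grid_direction_set_def by auto
    have Wne: "W \<noteq> {}"
    proof
      assume "W = {}"
      hence "(UNIV :: (real^'n) set) = {0}" using spW by simp
      hence "(axis undefined 1 :: real^'n) = 0" by blast
      thus False by (simp add: axis_eq_0_iff)
    qed
    have nb: "\<And>d. d \<in> W \<Longrightarrow> x + h *\<^sub>R d \<in> grid h \<and> x - h *\<^sub>R d \<in> grid h"
      using assms(4) True by auto
    have cmp: "Dvv h u d x \<le> Dvv h v d x" if d: "d \<in> W" for d
    proof -
      have "d \<noteq> 0" using d W0 by auto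
      hence den: "h\<^sup>2 * (norm d)\<^sup>2 > 0" using assms(2) by auto
      have "u (x + h *\<^sub>R d) - v (x + h *\<^sub>R d) \<le> M" "u (x - h *\<^sub>R d) - v (x - h *\<^sub>R d) \<le> M"
        using Mge nb[OF d] by auto
      hence "u (x + h *\<^sub>R d) - 2 * u x + u (x - h *\<^sub>R d) \<le> v (x + h *\<^sub>R d) - 2 * v x + v (x - h *\<^sub>R d)"
        using xM by linarith
      thus ?thesis unfolding Dvv_def using den by (simp add: divide_right_mono)
    qed
    obtain d where d: "d \<in> W" "lambda_h W h v x = Dvv h v d x"
    proof -
      have "lambda_h W h v x \<in> (\<lambda>d. Dvv h v d x) ` W"
        unfolding lambda_h_def using fW Wne by (intro Min_in) auto
      thus ?thesis using that by auto
    qed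
    have lu: "lambda_h W h u x \<le> Dvv h u d x"
      unfolding lambda_h_def using fW d(1) by (intro Min_le) auto
    have luv: "lambda_h W h u x \<le> lambda_h W h v x" using lu cmp[OF d(1)] d(2) by linarith
    have Fu: "F_obst W \<Omega> g h u x = max (u x - g x) (- lambda_h W h u x)"
     and Fv: "F_obst W \<Omega> g h v x = max (v x - g x) (- lambda_h W h v x)"
      using True unfolding F_obst_def by auto
    have eqlam: "lambda_h W h u x = lambda_h W h v x"
      and vlam: "v x - g x < - lambda_h W h v x"
      using Fx Fu Fv luv xM Mpos by (auto simp: max_def split: if_splits)
    have eqD: "Dvv h u d x = Dvv h v d x" using lu cmp[OF d(1)] d(2) eqlam by linarith
    have "d \<noteq> 0" using d W0 by auto
    hence den: "h\<^sup>2 * (norm d)\<^sup>2 > 0" using assms(2) by auto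
    have num: "u (x + h *\<^sub>R d) - 2 * u x + u (x - h *\<^sub>R d) = v (x + h *\<^sub>R d) - 2 * v x + v (x - h *\<^sub>R d)"
    proof -
      have "(u (x + h *\<^sub>R d) - 2 * u x + u (x - h *\<^sub>R d)) / (h\<^sup>2 * (norm d)\<^sup>2) = (v (x + h *\<^sub>R d) - 2 * v x + v (x - h *\<^sub>R d)) / (h\<^sup>2 * (norm d)\<^sup>2)"
        using eqD unfolding Dvv_def .
      thus ?thesis using den by (metis divide_cancel_right less_irrefl)
    qed
    have "u (x + h *\<^sub>R d) - v (x + h *\<^sub>R d) \<le> M" "u (x - h *\<^sub>R d) - v (x - h *\<^sub>R d) \<le> M"
      using Mge nb[OF d(1)] by auto
    hence "u (x + h *\<^sub>R d) - v (x + h *\<^sub>R d) = M" "u (x - h *\<^sub>R d) - v (x - h *\<^sub>R d) = M"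
      using num xM by linarith+
    hence inA: "x + h *\<^sub>R d \<in> A" "x - h *\<^sub>R d \<in> A" using nb[OF d(1)] unfolding A_def by auto
    have n1: "norm (x + h *\<^sub>R d) \<le> norm x" and n2: "norm (x - h *\<^sub>R d) \<le> norm x"
      using Rge[OF inA(1)] Rge[OF inA(2)] x(2) by auto
    have "(norm (x + h *\<^sub>R d))\<^sup>2 + (norm (x - h *\<^sub>R d))\<^sup>2 = 2 * (norm x)\<^sup>2 + 2 * (norm (h *\<^sub>R d))\<^sup>2"
      unfolding power2_norm_eq_inner by (simp add: inner_add_left inner_add_right inner_diff_left inner_diff_right inner_commute)
    moreover have "(norm (h *\<^sub>R d))\<^sup>2 > 0" using \<open>d \<noteq> 0\<close> assms(2) by simp
    moreover have "(norm (x + h *\<^sub>R d))\<^sup>2 \<le> (norm x)\<^sup>2" "(norm (x - h *\<^sub>R d))\<^sup>2 \<le> (norm x)\<^sup>2"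
      using n1 n2 by (auto intro: power_mono)
    ultimately show False by linarith
  qed
qed

end
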